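(* Let $\mathbb{F},\widetilde{\mathbb{F}}$ be arbitrary fields of characteristic not $2$, and let $f:\mathbb{F}\to\widetilde{\mathbb{F}}$ be an SD-map. Then $f$ is injective, multiplicative (i.e.\ $f(xy)=f(x)f(y)$ for all $x,y\in\mathbb{F}$), and odd (i.e.\ $f(-x)=-f(x)$ for all $x$), and $f(0)=0$, $f(1)=1$.
   Context: A map $f:\mathbb{F}\to\widetilde{\mathbb{F}}$ between fields is called an SD-map if for all $x\neq y$ in $\mathbb{F}$ one has $f(x)\neq f(y)$ and \[ f\left(\frac{x+y}{x-y}\right)=\frac{f(x)+f(y)}{f(x)-f(y)}. \] *)

theory Defs
  imports Main
begin

definition SD_map :: "('a::field \<Rightarrow> 'b::field) \<Rightarrow> bool" where
  "SD_map f \<longleftrightarrow> (\<forall>x y. x \<noteq> y \<longrightarrow>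
      f x \<noteq> f y \<and> f ((x + y) / (x - y)) = (f x + f y) / (f x - f y))"

end

theory Submission
  imports Defs
begin

lemma two_ne0:
  assumes "CHAR('a::field) \<noteq> 2"
  shows "(2::'a) \<noteq> 0"
proof
  assume "(2::'a) = 0"
  hence "of_nat 2 = (0::'a)" by simp
  hence "CHAR('a) dvd 2" by (simp only: of_nat_eq_0_iff_char_dvd)
  hence "CHAR('a) \<le> 2" by (rule dvd_imp_le) simp
  moreover have "CHAR('a) \<noteq> 0" using \<open>CHAR('a) dvd 2\<close> by (intro notI) simp
  moreover have "CHAR('a) \<noteq> Suc 0" by (rule CHAR_not_1)
  ultimately show False using assms by linarith
qed

theorem theorem2p1:
  fixes f :: "'a::field \<Rightarrow> 'b::field"
  assumes "CHAR('a) \<noteq> 2" and "CHAR('b) \<noteq> 2"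
    and "SD_map f"
  shows "inj f \<and> (\<forall>x y. f (x * y) = f x * f y) \<and> (\<forall>x. f (- x) = - f x)
         \<and> f 0 = 0 \<and> f 1 = 1"
proof -
  have A: "(2::'a) \<noteq> 0" using two_ne0 assms(1) by blast
  have B: "(2::'b) \<noteq> 0" using two_ne0 assms(2) by blast
  have ne: "\<And>x y. x \<noteq> y \<Longrightarrow> f x \<noteq> f y" using assms(3) unfolding SD_map_def by blast
  have sd: "\<And>x y. x \<noteq> y \<Longrightarrow> f ((x + y) / (x - y)) = (f x + f y) / (f x - f y)"
    using assms(3) unfolding SD_map_def by blast
  have inj: "inj f" using ne by (meson injI)
  have m1: "(1::'a) \<noteq> -1"
  proof
    assume "(1::'a) = -1"
    hence "(2::'a) = 1 - (-1)" by simp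
    also have "\<dots> = 0" using \<open>(1::'a) = -1\<close> by simp
    finally show False using A by simp
  qed
  have h1: "f 1 = (f x + f 0) / (f x - f 0)" if "x \<noteq> 0" for x
    using sd[OF that] that by simp
  have e1: "f 1 * (f x - f 0) = f x + f 0" if "x \<noteq> 0" for x
    using h1[OF that] ne[OF that] by (simp add: field_simps)
  have f1: "f 1 = 1"
  proof (rule ccontr)
    assume c: "f 1 \<noteq> 1"
    have cst: "f x = f 0 * (f 1 + 1) / (f 1 - 1)" if "x \<noteq> 0" for x
      using e1[OF that] c by (simp add: field_simps)
    have c1: "f 1 = f 0 * (f 1 + 1) / (f 1 - 1)" using cst[of 1] by simp
    have c2: "f (-1) = f 0 * (f 1 + 1) / (f 1 - 1)" using cst[of "-1"] by simp
    have "f 1 = f (-1)" using c1 c2 by (simp only:)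
    with ne m1 show False by blast
  qed
  have f0: "f 0 = 0"
  proof -
    have "f 1 - f 0 = f 1 + f 0" using e1[of 1] f1 by simp
    hence "2 * f 0 = 0" by (simp add: algebra_simps)
    thus ?thesis using B by simp
  qed
  have odd: "f (- x) = - f x" for x
  proof (cases "x = 0")
    case True thus ?thesis using f0 by simp
  next
    case False
    have xn: "x \<noteq> - x"
    proof
      assume "x = - x"
      hence "x + x = 0" by (metis add.right_inverse)
      hence "2 * x = 0" by (simp only: mult_2)
      thus False using A False by simp
    qed
    have "f ((x + - x) / (x - - x)) = (f x + f (-x)) / (f x - f (-x))" using sd[OF xn] .
    hence "(f x + f (-x)) / (f x - f (-x)) = 0" using f0 by simp
    moreover have "f x - f (-x) \<noteq> 0" using ne[OF xn] by simp
    ultimately have "f x + f (-x) = 0" by simp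
    hence "f (-x) = - f x" by (metis add.commute add_eq_0_iff2)
    thus ?thesis .
  qed
  have gi: "u = v" if "(u + 1) / (u - 1) = (v + 1) / (v - (1::'b))" "u \<noteq> 1" "v \<noteq> 1" for u v
  proof -
    have "u - 1 \<noteq> 0" "v - 1 \<noteq> 0" using that by auto
    hence "(u + 1) * (v - 1) = (v + 1) * (u - 1)" using that(1) by (simp add: field_simps)
    thus ?thesis using B by (auto simp: algebra_simps)
  qed
  have div: "f (x / y) = f x / f y" for x y
  proof (cases "y = 0")
    case True thus ?thesis using f0 by simp
  next
    case yn: False
    hence fyn: "f y \<noteq> 0" using ne[of y 0] f0 by simp
    show ?thesis
    proof (cases "x = y")
      case True thus ?thesis using yn fyn f1 by simp
    next
      case xy: False
      have q1: "x / y \<noteq> 1" using xy yn by simp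
      have "(x + y) / (x - y) = (x / y + 1) / (x / y - 1)"
        using yn xy by (simp add: field_simps)
      hence "f ((x / y + 1) / (x / y - 1)) = (f x + f y) / (f x - f y)" using sd[OF xy] by simp
      moreover have "f ((x / y + 1) / (x / y - 1)) = (f (x/y) + 1) / (f (x/y) - 1)"
        using sd[OF q1] f1 by simp
      moreover have "(f x + f y) / (f x - f y) = (f x / f y + 1) / (f x / f y - 1)"
        using fyn ne[OF xy] by (simp add: field_simps)
      moreover have "f (x/y) \<noteq> 1" using ne[OF q1] f1 by simp
      moreover have "f x / f y \<noteq> 1" using ne[OF xy] fyn by simp
      ultimately show ?thesis using gi[of "f (x/y)" "f x / f y"] by simp
    qed
  qed
  have mult: "f (x * y) = f x * f y" for x y
  proof -
    have "f (1 / y) = 1 / f y" using div[of 1 y] f1 by simp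
    hence "f (x / (1 / y)) = f x * f y" using div[of x "1/y"] by simp
    thus ?thesis by simp
  qed
  show ?thesis using inj mult odd f0 f1 by blast
qed

end
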